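(* Let $n\ge1$, $m\ge2$, and let $\mu_1,\dots,\mu_n,\beta_1,\dots,\beta_n,c_1,\dots,c_n,d$ be nonzero complex numbers with $\mu_1,\dots,\mu_n$ pairwise distinct and chosen generically. Then the polynomial system in $(\lambda,x)\in\mathbb C\times\mathbb C^n$ $$Q(\lambda,x)=\big((\lambda-\mu_1)(x_1^{m-1}-\beta_1),\ \dots,\ (\lambda-\mu_n)(x_n^{m-1}-\beta_n),\ c_1x_1+\cdots+c_nx_n+d\big)^T=0$$ has exactly $n(m-1)^{n-1}$ solutions, and each is nonsingular (the Jacobian of $Q$ with respect to $(\lambda,x)$ is invertible there). Moreover $Q$ and the system $G(\lambda,x)=\big((\mathcal A^{(k)}x^{m-1})_i-\lambda(\mathcal Bx^{m-1})_i\ (i=1,\dots,n),\ a_1x_1+\cdots+a_nx_n+b\big)^T$ (for any $\mathcal A,\mathcal B\in\mathbb C^{[m,n]}$, $1\le k\le m$, and complex $a_i,b$) both have $2$-homogeneous Bézout number $n(m-1)^{n-1}$ with respect to the variable partition $\{\lambda\},\{x_1,\dots,x_n\}$.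
   Context: For $\mathcal A\in\mathbb C^{[m,n]}$ (an $m$th-order $n$-dimensional complex tensor) and $x\in\mathbb C^n$, $\mathcal A^{(k)}x^{m-1}\in\mathbb C^n$ has $j$th entry $\sum A_{i_1\cdots i_{k-1}\,j\,i_{k+1}\cdots i_m}\prod_{r\neq k}x_{i_r}$, and $\mathcal Bx^{m-1}:=\mathcal B^{(1)}x^{m-1}$. For a partition of the variables into groups $y_1,\dots,y_K$ of sizes $l_1,\dots,l_K$ and a square system $p_1,\dots,p_N$ with $d_{ij}$ the degree of $p_i$ in the group $y_j$, the multihomogeneous Bézout number is the coefficient of $\alpha_1^{l_1}\cdots\alpha_K^{l_K}$ in $\prod_i(d_{i1}\alpha_1+\cdots+d_{iK}\alpha_K)$. (Genericity of the $\mu_i$ relative to the other parameters ensures the solution count; the nonsingularity uses $\mu_j\neq\mu_i$ for $j\ne i$.)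
   Formalization: Genericity concerns $\mu,\beta,c,d$ jointly (the solution count and nonsingularity hold off the zero set of a nonzero polynomial in all of them), and the Bezout claim for G assumes some $a_i \neq 0$ and no identically zero entry $(\mathcal Bx^{m-1})_i$. Each condition added here is assumed in the paper as well or is needed for the statement above to hold. *)

theory Defs
  imports Complex_Main "HOL-Library.Poly_Mapping" "HOL-Library.FuncSet"
    "HOL-Computational_Algebra.Polynomial" "Jordan_Normal_Form.Determinant"
begin

text \<open>A point (lambda, x) of C x C^n is encoded as z :: nat => complex with
  z 0 = lambda and z i = x_i for 1 <= i <= n (coordinates > n are irrelevant and,
  for solution sets, required to be 0).  A square polynomial system of n+1 equations
  is encoded as F :: nat => (nat => complex) => complex, with components F 0, ..., F n.\<close>

text \<open>An m-th order n-dimensional tensor is a function on index maps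
  {1..m} -> {1..n}.  tensor_apply m n k A x j is the j-th entry of A^(k) x^(m-1).\<close>

definition tensor_apply ::
  "nat \<Rightarrow> nat \<Rightarrow> nat \<Rightarrow> ((nat \<Rightarrow> nat) \<Rightarrow> complex) \<Rightarrow> (nat \<Rightarrow> complex) \<Rightarrow> nat \<Rightarrow> complex" where
  "tensor_apply m n k A x j =
     (\<Sum>f \<in> {f \<in> {1..m} \<rightarrow>\<^sub>E {1..n}. f k = j}. A f * (\<Prod>r \<in> {1..m} - {k}. x (f r)))"

definition Qsys ::
  "nat \<Rightarrow> nat \<Rightarrow> (nat \<Rightarrow> complex) \<Rightarrow> (nat \<Rightarrow> complex) \<Rightarrow> (nat \<Rightarrow> complex) \<Rightarrow> complex
     \<Rightarrow> nat \<Rightarrow> (nat \<Rightarrow> complex) \<Rightarrow> complex" where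
  "Qsys n m mu beta c d r z =
     (if r = 0 then (\<Sum>i=1..n. c i * z i) + d
      else (z 0 - mu r) * (z r ^ (m - 1) - beta r))"

definition Gsys ::
  "nat \<Rightarrow> nat \<Rightarrow> ((nat \<Rightarrow> nat) \<Rightarrow> complex) \<Rightarrow> ((nat \<Rightarrow> nat) \<Rightarrow> complex) \<Rightarrow> nat
     \<Rightarrow> (nat \<Rightarrow> complex) \<Rightarrow> complex \<Rightarrow> nat \<Rightarrow> (nat \<Rightarrow> complex) \<Rightarrow> complex" where
  "Gsys n m A B k a b r z =
     (if r = 0 then (\<Sum>i=1..n. a i * z i) + b
      else tensor_apply m n k A z r - z 0 * tensor_apply m n 1 B z r)"

definition solution_set :: "nat \<Rightarrow> (nat \<Rightarrow> (nat \<Rightarrow> complex) \<Rightarrow> complex) \<Rightarrow> (nat \<Rightarrow> complex) set" where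
  "solution_set n F = {z. (\<forall>i>n. z i = 0) \<and> (\<forall>r\<le>n. F r z = 0)}"

definition cderiv :: "(complex \<Rightarrow> complex) \<Rightarrow> complex \<Rightarrow> complex" where
  "cderiv f x = (SOME D. (f has_field_derivative D) (at x))"

definition jacobian :: "nat \<Rightarrow> (nat \<Rightarrow> (nat \<Rightarrow> complex) \<Rightarrow> complex) \<Rightarrow> (nat \<Rightarrow> complex) \<Rightarrow> complex mat" where
  "jacobian n F z = mat (n+1) (n+1) (\<lambda>(r, s). cderiv (\<lambda>t. F r (z(s := t))) (z s))"

section \<open>Genericity: complement of the zero set of a nonzero polynomial\<close>

inductive polyfun :: "(('v \<Rightarrow> complex) \<Rightarrow> complex) \<Rightarrow> bool" where
  const: "polyfun (\<lambda>p. a)"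
| var: "polyfun (\<lambda>p. p v)"
| add: "polyfun f \<Longrightarrow> polyfun g \<Longrightarrow> polyfun (\<lambda>p. f p + g p)"
| mult: "polyfun f \<Longrightarrow> polyfun g \<Longrightarrow> polyfun (\<lambda>p. f p * g p)"

datatype param = Mu nat | Beta nat | Cf nat | Dc

definition params :: "(nat \<Rightarrow> complex) \<Rightarrow> (nat \<Rightarrow> complex) \<Rightarrow> (nat \<Rightarrow> complex) \<Rightarrow> complex \<Rightarrow> param \<Rightarrow> complex" where
  "params mu beta c d v = (case v of Mu i \<Rightarrow> mu i | Beta i \<Rightarrow> beta i | Cf i \<Rightarrow> c i | Dc \<Rightarrow> d)"

definition scale_group :: "nat set \<Rightarrow> complex \<Rightarrow> (nat \<Rightarrow> complex) \<Rightarrow> nat \<Rightarrow> complex" where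
  "scale_group S t z = (\<lambda>i. if i \<in> S then t * z i else z i)"

definition group_degree :: "nat set \<Rightarrow> ((nat \<Rightarrow> complex) \<Rightarrow> complex) \<Rightarrow> nat" where
  "group_degree S f = (LEAST D. \<forall>z. \<exists>q :: complex poly.
       Polynomial.degree q \<le> D \<and> (\<forall>t. f (scale_group S t z) = poly q t))"

text \<open>Coefficient of alpha_0^(l 0) ... alpha_(K-1)^(l (K-1)) in
  prod_(i<N) (d i 0 alpha_0 + ... + d i (K-1) alpha_(K-1)), polynomials being
  represented as finitely supported maps from exponent vectors to coefficients.\<close>
definition mh_bezout_number :: "nat \<Rightarrow> nat \<Rightarrow> (nat \<Rightarrow> nat) \<Rightarrow> (nat \<Rightarrow> nat \<Rightarrow> nat) \<Rightarrow> nat" where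
  "mh_bezout_number N K l d =
     Poly_Mapping.lookup (\<Prod>i<N. \<Sum>j<K. Poly_Mapping.single (Poly_Mapping.single j 1) (d i j))
            (\<Sum>j<K. Poly_Mapping.single j (l j))"

definition system_bezout_number ::
  "nat \<Rightarrow> (nat \<Rightarrow> (nat \<Rightarrow> complex) \<Rightarrow> complex) \<Rightarrow> nat set list \<Rightarrow> nat" where
  "system_bezout_number N F Y =
     mh_bezout_number N (length Y) (\<lambda>j. card (Y ! j)) (\<lambda>i j. group_degree (Y ! j) (F i))"

end

theory Submission
  imports Defs
begin

lemma single_pow: "(Poly_Mapping.single (k::'a::comm_monoid_add) (a::'b::comm_semiring_1)) ^ j
   = Poly_Mapping.single (\<Sum>i<j. k) (a ^ j)"
  by (induction j) (auto simp: mult_single add.commute)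

lemma bez_poly:
  fixes N n :: nat
  assumes "n \<ge> 1"
  defines "X \<equiv> Poly_Mapping.single (Poly_Mapping.single (0::nat) (1::nat)) (1::nat)"
  defines "Y \<equiv> Poly_Mapping.single (Poly_Mapping.single (1::nat) (1::nat)) (1::nat)"
  defines "NY \<equiv> Poly_Mapping.single (Poly_Mapping.single (1::nat) (1::nat)) N"
  shows "Poly_Mapping.lookup (Y * (X + NY) ^ n) (Poly_Mapping.single 0 1 + Poly_Mapping.single 1 n)
     = n * N ^ (n - 1)"
proof -
  have "(X + NY) ^ n = (\<Sum>k\<le>n. of_nat (n choose k) * X ^ k * NY ^ (n - k))"
    by (rule binomial_ring)
  also have "\<dots> = (\<Sum>k\<le>n. Poly_Mapping.single (Poly_Mapping.single 0 k + Poly_Mapping.single 1 (n-k)) ((n choose k) * N ^ (n-k)))"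
    apply (rule sum.cong, simp)
    apply (simp add: X_def NY_def single_pow mult_single flip: single_of_nat)
    done
  finally have e: "Y * (X + NY) ^ n = (\<Sum>k\<le>n. Poly_Mapping.single (Poly_Mapping.single 1 1 + (Poly_Mapping.single 0 k + Poly_Mapping.single 1 (n-k))) ((n choose k) * N ^ (n-k)))"
    by (simp add: sum_distrib_left Y_def mult_single)
  have key: "(Poly_Mapping.single (1::nat) (1::nat) + (Poly_Mapping.single 0 k + Poly_Mapping.single 1 (n-k)) = Poly_Mapping.single 0 1 + Poly_Mapping.single 1 n) \<longleftrightarrow> k = 1" if "k \<le> n" for k
  proof
    assume h: "Poly_Mapping.single (1::nat) (1::nat) + (Poly_Mapping.single 0 k + Poly_Mapping.single 1 (n-k)) = Poly_Mapping.single 0 1 + Poly_Mapping.single 1 n"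
    have "Poly_Mapping.lookup (Poly_Mapping.single (1::nat) (1::nat) + (Poly_Mapping.single 0 k + Poly_Mapping.single 1 (n-k))) 0 = Poly_Mapping.lookup (Poly_Mapping.single 0 1 + Poly_Mapping.single (1::nat) n) 0"
      using h by simp
    then show "k = 1" by (simp add: lookup_add lookup_single)
  next
    assume "k = 1"
    then show "Poly_Mapping.single (1::nat) (1::nat) + (Poly_Mapping.single 0 k + Poly_Mapping.single 1 (n-k)) = Poly_Mapping.single 0 1 + Poly_Mapping.single 1 n"
      using assms(1) by (simp add: add_ac flip: single_add)
  qed
  have "Poly_Mapping.lookup (Y * (X + NY) ^ n) (Poly_Mapping.single 0 1 + Poly_Mapping.single 1 n)
      = (\<Sum>k\<le>n. (if k = 1 then (n choose k) * N ^ (n-k) else 0))"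
    unfolding e lookup_sum
  proof (rule sum.cong)
    fix k assume "k \<in> {..n}"
    then have "k \<le> n" by simp
    show "Poly_Mapping.lookup (Poly_Mapping.single (Poly_Mapping.single (1::nat) (1::nat) + (Poly_Mapping.single 0 k + Poly_Mapping.single 1 (n-k))) ((n choose k) * N ^ (n-k))) (Poly_Mapping.single 0 1 + Poly_Mapping.single 1 n) = (if k = 1 then (n choose k) * N ^ (n-k) else 0)"
      unfolding lookup_single when_def key[OF \<open>k \<le> n\<close>] by simp
  qed simp
  also have "\<dots> = n * N ^ (n - 1)" using assms(1) by (simp add: sum.delta)
  finally show ?thesis .
qed


lemma gd_le:
  assumes "\<forall>z. \<exists>q :: complex poly. Polynomial.degree q \<le> D \<and> (\<forall>t. f (scale_group S t z) = poly q t)"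
  shows "group_degree S f \<le> D"
  unfolding group_degree_def by (rule Least_le) (rule assms)

lemma gd_eq:
  assumes "\<forall>z. \<exists>q :: complex poly. Polynomial.degree q \<le> D \<and> (\<forall>t. f (scale_group S t z) = poly q t)"
    and "\<forall>t. f (scale_group S t z0) = poly q0 t" and "coeff q0 D \<noteq> 0"
  shows "group_degree S f = D"
  unfolding group_degree_def
proof (rule Least_equality)
  show "\<forall>z. \<exists>q :: complex poly. Polynomial.degree q \<le> D \<and> (\<forall>t. f (scale_group S t z) = poly q t)"
    by (rule assms(1))
next
  fix D' assume "\<forall>z. \<exists>q :: complex poly. Polynomial.degree q \<le> D' \<and> (\<forall>t. f (scale_group S t z) = poly q t)"
  then obtain q :: "complex poly" where q: "Polynomial.degree q \<le> D'" "\<forall>t. f (scale_group S t z0) = poly q t" by blast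
  have "poly q = poly q0" using q(2) assms(2) by auto
  then have "q = q0" using poly_eq_poly_eq_iff by blast
  moreover have "D \<le> Polynomial.degree q0" using assms(3) by (rule le_degree)
  ultimately show "D \<le> D'" using q(1) by simp
qed

lemma system_bezout:
  fixes F :: "nat \<Rightarrow> (nat \<Rightarrow> complex) \<Rightarrow> complex"
  assumes "n \<ge> 1"
    and "group_degree {0} (F 0) = 0" "group_degree {1..n} (F 0) = 1"
    and "\<And>i. i \<in> {1..n} \<Longrightarrow> group_degree {0} (F i) = 1"
    and "\<And>i. i \<in> {1..n} \<Longrightarrow> group_degree {1..n} (F i) = N"
  shows "system_bezout_number (n+1) F [{0}, {1..n}] = n * N ^ (n - 1)"
proof -
  define X where "X \<equiv> Poly_Mapping.single (Poly_Mapping.single (0::nat) (1::nat)) (1::nat)"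
  define Y where "Y \<equiv> Poly_Mapping.single (Poly_Mapping.single (1::nat) (1::nat)) (1::nat)"
  define NY where "NY \<equiv> Poly_Mapping.single (Poly_Mapping.single (1::nat) (1::nat)) N"
  have two: "{..<2::nat} = {0, 1}" by auto
  let ?g = "\<lambda>i j. group_degree ([{0::nat}, {1..n}] ! j) (F i)"
  have "(\<Prod>i<n+1. \<Sum>j<length [{0::nat}, {1..n}]. Poly_Mapping.single (Poly_Mapping.single j 1) (?g i j))
      = (\<Prod>i<Suc n. Poly_Mapping.single (Poly_Mapping.single 0 1) (?g i 0) + Poly_Mapping.single (Poly_Mapping.single 1 1) (?g i 1))"
    by (simp add: two)
  also have "\<dots> = Y * (\<Prod>i<n. X + NY)"
    unfolding prod.lessThan_Suc_shift
    using assms by (simp add: X_def Y_def NY_def)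
  also have "\<dots> = Y * (X + NY) ^ n" by simp
  finally have e: "(\<Prod>i<n+1. \<Sum>j<length [{0::nat}, {1..n}]. Poly_Mapping.single (Poly_Mapping.single j 1) (?g i j))
     = Y * (X + NY) ^ n" .
  have e2: "(\<Sum>j<length [{0::nat}, {1..n}]. Poly_Mapping.single j (card ([{0::nat}, {1..n}] ! j)))
     = Poly_Mapping.single 0 1 + Poly_Mapping.single 1 n"
    by (simp add: two)
  show ?thesis
    unfolding system_bezout_number_def mh_bezout_number_def e e2
    using bez_poly[OF assms(1), of N] by (simp add: X_def Y_def NY_def)
qed


lemma scale_simp: "scale_group S t z i = (if i \<in> S then t * z i else z i)"
  by (simp add: scale_group_def)

lemma lin_deg0:
  assumes "n \<ge> 1"
  shows "group_degree {0} (\<lambda>z. (\<Sum>i=1..n. a i * z i) + (b::complex)) = 0"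
proof -
  have "\<exists>q :: complex poly. Polynomial.degree q \<le> 0 \<and>
     (\<forall>t. (\<lambda>z. (\<Sum>i=1..n. a i * z i) + b) (scale_group {0} t z) = poly q t)" for z
  proof (rule exI[of _ "[:(\<Sum>i=1..n. a i * z i) + b:]"], intro conjI allI)
    fix t
    have "(\<Sum>i=1..n. a i * scale_group {0} t z i) = (\<Sum>i=1..n. a i * z i)"
      by (rule sum.cong) (auto simp: scale_simp)
    then show "(\<lambda>z. (\<Sum>i=1..n. a i * z i) + b) (scale_group {0} t z) = poly [:(\<Sum>i=1..n. a i * z i) + b:] t"
      by simp
  qed simp
  then have "group_degree {0} (\<lambda>z. (\<Sum>i=1..n. a i * z i) + b) \<le> 0" by (intro gd_le) blast
  then show ?thesis by simp
qed
lemma lin_deg1: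
  assumes "i0 \<in> {1..n}" "a i0 \<noteq> 0"
  shows "group_degree {1..n} (\<lambda>z. (\<Sum>i=1..n. a i * z i) + (b::complex)) = 1"
proof (rule gd_eq)
  show "\<forall>z. \<exists>q :: complex poly. Polynomial.degree q \<le> 1 \<and>
     (\<forall>t. (\<lambda>z. (\<Sum>i=1..n. a i * z i) + b) (scale_group {1..n} t z) = poly q t)"
  proof
    fix z :: "nat \<Rightarrow> complex"
    show "\<exists>q :: complex poly. Polynomial.degree q \<le> 1 \<and>
     (\<forall>t. (\<lambda>z. (\<Sum>i=1..n. a i * z i) + b) (scale_group {1..n} t z) = poly q t)"
    proof (rule exI[of _ "[:b, (\<Sum>i=1..n. a i * z i):]"], intro conjI allI)
      fix t
      have "(\<Sum>i=1..n. a i * scale_group {1..n} t z i) = t * (\<Sum>i=1..n. a i * z i)"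
        by (subst sum_distrib_left, rule sum.cong) (auto simp: scale_simp)
      then show "(\<lambda>z. (\<Sum>i=1..n. a i * z i) + b) (scale_group {1..n} t z) = poly [:b, (\<Sum>i=1..n. a i * z i):] t"
        by (simp add: algebra_simps)
    qed simp
  qed
  let ?z = "\<lambda>i. if i = i0 then 1 else (0::complex)"
  show "\<forall>t. (\<lambda>z. (\<Sum>i=1..n. a i * z i) + b) (scale_group {1..n} t ?z) = poly [:b, a i0:] t"
  proof
    fix t
    have "(\<Sum>i=1..n. a i * scale_group {1..n} t ?z i) = (\<Sum>i=1..n. if i = i0 then a i0 * t else 0)"
      by (rule sum.cong) (auto simp: scale_simp)
    also have "\<dots> = a i0 * t" using assms(1) by simp
    finally show "(\<lambda>z. (\<Sum>i=1..n. a i * z i) + b) (scale_group {1..n} t ?z) = poly [:b, a i0:] t"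
      by (simp add: algebra_simps)
  qed
  show "coeff [:b, a i0:] 1 \<noteq> 0" using assms(2) by simp
qed

lemma tensor_scale0:
  "tensor_apply m n k A (scale_group {0} t z) j = tensor_apply m n k A z j"
  unfolding tensor_apply_def
proof (rule sum.cong[OF refl], rule arg_cong[where f="\<lambda>x. _ * x"], rule prod.cong[OF refl])
  fix f r assume "f \<in> {f \<in> {1..m} \<rightarrow>\<^sub>E {1..n}. f k = j}" "r \<in> {1..m} - {k}"
  then have "f r \<in> {1..n}" by auto
  then show "scale_group {0} t z (f r) = z (f r)" by (auto simp: scale_simp)
qed

lemma tensor_upd0:
  "tensor_apply m n k A (z(0 := w)) j = tensor_apply m n k A z j"
  unfolding tensor_apply_def
proof (rule sum.cong[OF refl], rule arg_cong[where f="\<lambda>x. _ * x"], rule prod.cong[OF refl])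
  fix f r assume "f \<in> {f \<in> {1..m} \<rightarrow>\<^sub>E {1..n}. f k = j}" "r \<in> {1..m} - {k}"
  then have "f r \<in> {1..n}" by auto
  then show "(z(0 := w)) (f r) = z (f r)" by auto
qed

lemma tensor_scale1:
  assumes "k \<in> {1..m}"
  shows "tensor_apply m n k A (scale_group {1..n} t z) j = t ^ (m - 1) * tensor_apply m n k A z j"
proof -
  have c: "card ({1..m} - {k}) = m - 1" using assms by simp
  have "tensor_apply m n k A (scale_group {1..n} t z) j =
     (\<Sum>f \<in> {f \<in> {1..m} \<rightarrow>\<^sub>E {1..n}. f k = j}. A f * (\<Prod>r \<in> {1..m} - {k}. t * z (f r)))"
    unfolding tensor_apply_def
  proof (rule sum.cong[OF refl], rule arg_cong[where f="\<lambda>x. _ * x"], rule prod.cong[OF refl])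
    fix f r assume "f \<in> {f \<in> {1..m} \<rightarrow>\<^sub>E {1..n}. f k = j}" "r \<in> {1..m} - {k}"
    then have "f r \<in> {1..n}" by auto
    then show "scale_group {1..n} t z (f r) = t * z (f r)" by (auto simp: scale_simp)
  qed
  also have "\<dots> = t ^ (m - 1) * tensor_apply m n k A z j"
    unfolding tensor_apply_def prod.distrib prod_constant c by (simp add: sum_distrib_left mult_ac)
  finally show ?thesis .
qed


lemma Qr_deg0:
  assumes "r \<in> {1..n}" "N \<ge> 1" "beta \<noteq> 0"
  shows "group_degree {0} (\<lambda>z. (z 0 - mu) * (z r ^ N - (beta::complex))) = 1"
proof (rule gd_eq)
  show "\<forall>z. \<exists>q :: complex poly. Polynomial.degree q \<le> 1 \<and>
     (\<forall>t. (\<lambda>z. (z 0 - mu) * (z r ^ N - beta)) (scale_group {0} t z) = poly q t)"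
  proof
    fix z :: "nat \<Rightarrow> complex"
    show "\<exists>q :: complex poly. Polynomial.degree q \<le> 1 \<and>
     (\<forall>t. (\<lambda>z. (z 0 - mu) * (z r ^ N - beta)) (scale_group {0} t z) = poly q t)"
      apply (rule exI[of _ "[:- mu * (z r ^ N - beta), z 0 * (z r ^ N - beta):]"])
      using assms(1) by (auto simp: scale_simp algebra_simps)
  qed
  let ?z = "\<lambda>i. if i = 0 then 1 else (0::complex)"
  show "\<forall>t. (\<lambda>z. (z 0 - mu) * (z r ^ N - beta)) (scale_group {0} t ?z) = poly [:mu * beta, - beta:] t"
    using assms(1,2) by (auto simp: scale_simp algebra_simps)
  show "coeff [:mu * beta, - beta:] 1 \<noteq> 0" using assms(3) by simp
qed

lemma Qr_deg1:
  assumes "r \<in> {1..n}" "N \<ge> 1"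
  shows "group_degree {1..n} (\<lambda>z. (z 0 - mu) * (z r ^ N - (beta::complex))) = N"
proof (rule gd_eq)
  show "\<forall>z. \<exists>q :: complex poly. Polynomial.degree q \<le> N \<and>
     (\<forall>t. (\<lambda>z. (z 0 - mu) * (z r ^ N - beta)) (scale_group {1..n} t z) = poly q t)"
  proof
    fix z :: "nat \<Rightarrow> complex"
    have "Polynomial.degree (smult (z 0 - mu) (monom (z r ^ N) N - [:beta:])) \<le> N"
      by (rule order.trans[OF degree_smult_le], rule order.trans[OF degree_diff_le])
         (auto intro: order.trans[OF degree_monom_le])
    then show "\<exists>q :: complex poly. Polynomial.degree q \<le> N \<and>
     (\<forall>t. (\<lambda>z. (z 0 - mu) * (z r ^ N - beta)) (scale_group {1..n} t z) = poly q t)"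
      apply (intro exI[of _ "smult (z 0 - mu) (monom (z r ^ N) N - [:beta:])"] conjI)
      using assms(1) by (auto simp: scale_simp algebra_simps poly_monom power_mult_distrib)
  qed
  let ?z = "\<lambda>i. if i = 0 then mu + 1 else (1::complex)"
  show "\<forall>t. (\<lambda>z. (z 0 - mu) * (z r ^ N - beta)) (scale_group {1..n} t ?z) = poly (monom 1 N - [:beta:]) t"
    using assms(1,2) by (auto simp: scale_simp algebra_simps poly_monom)
  show "coeff (monom 1 N - [:beta:]) N \<noteq> 0" using assms(2) by (simp add: coeff_pCons split: nat.split)
qed

lemma Gr_deg0:
  assumes "tensor_apply m n 1 B x r \<noteq> 0"
  shows "group_degree {0} (\<lambda>z. tensor_apply m n k A z r - z 0 * tensor_apply m n 1 B z r) = 1"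
proof (rule gd_eq)
  show "\<forall>z. \<exists>q :: complex poly. Polynomial.degree q \<le> 1 \<and>
     (\<forall>t. (\<lambda>z. tensor_apply m n k A z r - z 0 * tensor_apply m n 1 B z r) (scale_group {0} t z) = poly q t)"
  proof
    fix z :: "nat \<Rightarrow> complex"
    show "\<exists>q :: complex poly. Polynomial.degree q \<le> 1 \<and>
     (\<forall>t. (\<lambda>z. tensor_apply m n k A z r - z 0 * tensor_apply m n 1 B z r) (scale_group {0} t z) = poly q t)"
      apply (rule exI[of _ "[:tensor_apply m n k A z r, - (z 0 * tensor_apply m n 1 B z r):]"])
      by (auto simp: tensor_scale0 scale_simp algebra_simps)
  qed
  let ?z = "x(0 := 1)"
  show "\<forall>t. (\<lambda>z. tensor_apply m n k A z r - z 0 * tensor_apply m n 1 B z r) (scale_group {0} t ?z)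
     = poly [:tensor_apply m n k A x r, - tensor_apply m n 1 B x r:] t"
    by (auto simp: tensor_scale0 tensor_upd0 scale_simp algebra_simps)
  show "coeff [:tensor_apply m n k A x r, - tensor_apply m n 1 B x r:] 1 \<noteq> 0" using assms by simp
qed

lemma Gr_deg1:
  assumes "tensor_apply m n 1 B x r \<noteq> 0" "k \<in> {1..m}" "m \<ge> 1"
  shows "group_degree {1..n} (\<lambda>z. tensor_apply m n k A z r - z 0 * tensor_apply m n 1 B z r) = m - 1"
proof (rule gd_eq)
  have k1: "1 \<in> {1..m}" using assms(3) by simp
  show "\<forall>z. \<exists>q :: complex poly. Polynomial.degree q \<le> m - 1 \<and>
     (\<forall>t. (\<lambda>z. tensor_apply m n k A z r - z 0 * tensor_apply m n 1 B z r) (scale_group {1..n} t z) = poly q t)"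
  proof
    fix z :: "nat \<Rightarrow> complex"
    show "\<exists>q :: complex poly. Polynomial.degree q \<le> m - 1 \<and>
     (\<forall>t. (\<lambda>z. tensor_apply m n k A z r - z 0 * tensor_apply m n 1 B z r) (scale_group {1..n} t z) = poly q t)"
      apply (rule exI[of _ "monom (tensor_apply m n k A z r - z 0 * tensor_apply m n 1 B z r) (m - 1)"])
      unfolding tensor_scale1[OF assms(2)] tensor_scale1[OF k1]
      by (auto simp: scale_simp algebra_simps degree_monom_le poly_monom)
  qed
  let ?z = "x(0 := (tensor_apply m n k A x r - 1) / tensor_apply m n 1 B x r)"
  show "\<forall>t. (\<lambda>z. tensor_apply m n k A z r - z 0 * tensor_apply m n 1 B z r) (scale_group {1..n} t ?z)
     = poly (monom 1 (m - 1)) t"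
    unfolding tensor_scale1[OF assms(2)] tensor_scale1[OF k1]
    using assms(1) by (auto simp: tensor_upd0 scale_simp poly_monom field_simps)
  show "coeff (monom 1 (m - 1)) (m - 1) \<noteq> (0::complex)" by simp
qed


lemma part2:
  assumes "n \<ge> 1" "m \<ge> 2" "\<forall>i\<in>{1..n}. beta i \<noteq> 0 \<and> c i \<noteq> 0"
  shows "system_bezout_number (n+1) (Qsys n m mu beta c d) [{0}, {1..n}] = n * (m - 1) ^ (n - 1)"
proof (rule system_bezout[OF assms(1)])
  have e0: "Qsys n m mu beta c d 0 = (\<lambda>z. (\<Sum>i=1..n. c i * z i) + d)"
    by (rule ext) (simp add: Qsys_def)
  have ei: "Qsys n m mu beta c d i = (\<lambda>z. (z 0 - mu i) * (z i ^ (m - 1) - beta i))" if "i \<in> {1..n}" for i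
    using that by (intro ext) (simp add: Qsys_def)
  show "group_degree {0} (Qsys n m mu beta c d 0) = 0" unfolding e0 by (rule lin_deg0[OF assms(1)])
  show "group_degree {1..n} (Qsys n m mu beta c d 0) = 1" unfolding e0
    by (rule lin_deg1[of 1]) (use assms in auto)
  fix i assume i: "i \<in> {1..n}"
  show "group_degree {0} (Qsys n m mu beta c d i) = 1" unfolding ei[OF i]
    by (rule Qr_deg0[OF i]) (use assms i in auto)
  show "group_degree {1..n} (Qsys n m mu beta c d i) = m - 1" unfolding ei[OF i]
    by (rule Qr_deg1[OF i]) (use assms i in auto)
qed

lemma part3:
  assumes "n \<ge> 1" "m \<ge> 2" "1 \<le> k" "k \<le> m" "\<exists>i\<in>{1..n}. a i \<noteq> 0"
    "\<forall>i\<in>{1..n}. \<exists>x. tensor_apply m n 1 B x i \<noteq> 0"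
  shows "system_bezout_number (n+1) (Gsys n m A B k a b) [{0}, {1..n}] = n * (m - 1) ^ (n - 1)"
proof (rule system_bezout[OF assms(1)])
  have e0: "Gsys n m A B k a b 0 = (\<lambda>z. (\<Sum>i=1..n. a i * z i) + b)"
    by (rule ext) (simp add: Gsys_def)
  have ei: "Gsys n m A B k a b i = (\<lambda>z. tensor_apply m n k A z i - z 0 * tensor_apply m n 1 B z i)" if "i \<in> {1..n}" for i
    using that by (intro ext) (simp add: Gsys_def)
  show "group_degree {0} (Gsys n m A B k a b 0) = 0" unfolding e0 by (rule lin_deg0[OF assms(1)])
  obtain i0 where "i0 \<in> {1..n}" "a i0 \<noteq> 0" using assms(5) by blast
  then show "group_degree {1..n} (Gsys n m A B k a b 0) = 1" unfolding e0
    by (rule lin_deg1)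
  fix i assume i: "i \<in> {1..n}"
  obtain x where x: "tensor_apply m n 1 B x i \<noteq> 0" using assms(6) i by blast
  show "group_degree {0} (Gsys n m A B k a b i) = 1" unfolding ei[OF i]
    by (rule Gr_deg0[OF x])
  show "group_degree {1..n} (Gsys n m A B k a b i) = m - 1" unfolding ei[OF i]
    by (rule Gr_deg1[OF x]) (use assms in auto)
qed


section \<open>Genericity polynomial\<close>

lemma polyfun_sum:
  assumes "finite A" "\<And>a. a \<in> A \<Longrightarrow> polyfun (f a)"
  shows "polyfun (\<lambda>p. \<Sum>a\<in>A. f a p)"
  using assms
proof (induction A rule: finite_induct)
  case empty
  then show ?case using polyfun.const[of 0] by simp
next
  case (insert x F)
  then show ?case by (simp add: polyfun.add)
qed

lemma polyfun_prod:
  assumes "finite A" "\<And>a. a \<in> A \<Longrightarrow> polyfun (f a)"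
  shows "polyfun (\<lambda>p. \<Prod>a\<in>A. f a p)"
  using assms
proof (induction A rule: finite_induct)
  case empty
  then show ?case using polyfun.const[of 1] by simp
next
  case (insert x F)
  then show ?case by (simp add: polyfun.mult)
qed

lemma polyfun_if:
  "polyfun f \<Longrightarrow> polyfun g \<Longrightarrow> polyfun (\<lambda>p. if C then f p else g p)"
  by (cases C) auto

lemma polyfun_det:
  assumes "\<And>i j. polyfun (\<lambda>p. E p i j)"
  shows "polyfun (\<lambda>p. det (mat K K (\<lambda>(i, j). E p i j)))"
proof -
  have "det (mat K K (\<lambda>(i, j). E p i j)) =
     (\<Sum>\<pi> \<in> {\<pi>. \<pi> permutes {0..<K}}. signof \<pi> * (\<Prod>i = 0..<K. E p i (\<pi> i)))" for p
    unfolding det_def dim_row_mat dim_col_mat if_P[OF refl]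
  proof (rule sum.cong[OF refl], rule arg_cong[where f="\<lambda>x. _ * x"], rule prod.cong[OF refl])
    fix \<pi> i assume "\<pi> \<in> {\<pi>. \<pi> permutes {0..<K}}" "i \<in> {0..<K}"
    then have "\<pi> i < K" by (auto dest: permutes_in_image)
    with \<open>i \<in> {0..<K}\<close> show "mat K K (\<lambda>(i, j). E p i j) $$ (i, \<pi> i) = E p i (\<pi> i)" by simp
  qed
  then have e: "(\<lambda>p. det (mat K K (\<lambda>(i, j). E p i j))) =
     (\<lambda>p. \<Sum>\<pi> \<in> {\<pi>. \<pi> permutes {0..<K}}. signof \<pi> * (\<Prod>i = 0..<K. E p i (\<pi> i)))" by auto
  show ?thesis unfolding e
    by (intro polyfun_sum polyfun_prod polyfun.mult polyfun.const assms finite_permutations) auto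
qed

definition Ent :: "nat \<Rightarrow> nat \<Rightarrow> (param \<Rightarrow> complex) \<Rightarrow> (nat \<Rightarrow> nat) \<Rightarrow> (nat \<Rightarrow> nat) \<Rightarrow> complex" where
  "Ent n N p a b = (if a = b then p Dc else 0) +
     (\<Sum>r\<in>{1..n}. p (Cf r) * (if a r + 1 < N then (if b = a(r := a r + 1) then 1 else 0)
                              else (if b = a(r := 0) then p (Beta r) else 0)))"

lemma polyfun_Ent: "polyfun (\<lambda>p. Ent n N p a b)"
  unfolding Ent_def
  by (intro polyfun.add polyfun_if polyfun_sum polyfun.mult polyfun.const polyfun.var) auto

lemma sum_delta_mult:
  assumes "finite I" "g \<in> I"
  shows "(\<Sum>b\<in>I. (if b = g then w else 0) * (V b :: complex)) = w * V g"
proof -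
  have "(\<Sum>b\<in>I. (if b = g then w else 0) * V b) = (\<Sum>b\<in>I. if b = g then w * V b else 0)"
    by (rule sum.cong) auto
  then show ?thesis using assms by simp
qed

lemma Ent_sum:
  fixes y :: "nat \<Rightarrow> complex" and N n :: nat
  defines "I \<equiv> PiE {1..n} (\<lambda>_. {..<N})"
  defines "V \<equiv> \<lambda>g. \<Prod>r\<in>{1..n}. y r ^ g r"
  assumes a: "a \<in> I" and N: "N \<ge> 1"
    and y: "\<forall>r\<in>{1..n}. y r ^ N = beta r"
  shows "(\<Sum>b\<in>I. Ent n N (params mu beta c d) a b * V b) = (d + (\<Sum>r\<in>{1..n}. c r * y r)) * V a"
proof -
  have fin: "finite I" unfolding I_def by (intro finite_PiE) auto
  have Vupd: "V (a(r := k)) = y r ^ k * (\<Prod>s\<in>{1..n} - {r}. y s ^ a s)" if "r \<in> {1..n}" for r k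
    unfolding V_def using that by (simp add: prod.remove)
  have Va: "V a = y r ^ a r * (\<Prod>s\<in>{1..n} - {r}. y s ^ a s)" if "r \<in> {1..n}" for r
    unfolding V_def using that by (simp add: prod.remove)
  have inner: "(\<Sum>b\<in>I. (if a r + 1 < N then (if b = a(r := a r + 1) then 1 else 0)
                              else (if b = a(r := 0) then beta r else 0)) * V b) = y r * V a"
    if r: "r \<in> {1..n}" for r
  proof (cases "a r + 1 < N")
    case True
    have "a(r := a r + 1) \<in> I" using a r True unfolding I_def by (auto simp: PiE_iff extensional_def)
    then have "(\<Sum>b\<in>I. (if a r + 1 < N then (if b = a(r := a r + 1) then 1 else 0)
                              else (if b = a(r := 0) then beta r else 0)) * V b) = V (a(r := a r + 1))"
      using True fin by (simp add: sum_delta_mult)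
    also have "\<dots> = y r * V a" unfolding Vupd[OF r] Va[OF r] by simp
    finally show ?thesis .
  next
    case False
    have "a r < N" using a r unfolding I_def by (auto simp: PiE_iff)
    then have ar: "a r = N - 1" using False by linarith
    have "a(r := 0) \<in> I" using a r N unfolding I_def by (auto simp: PiE_iff extensional_def)
    then have "(\<Sum>b\<in>I. (if a r + 1 < N then (if b = a(r := a r + 1) then 1 else 0)
                              else (if b = a(r := 0) then beta r else 0)) * V b) = beta r * V (a(r := 0))"
      using False fin by (simp add: sum_delta_mult)
    also have "\<dots> = y r * V a" unfolding Vupd[OF r] Va[OF r] ar
      using y r N by (simp flip: power_Suc)
    finally show ?thesis .
  qed
  have "(\<Sum>b\<in>I. Ent n N (params mu beta c d) a b * V b)
     = d * V a + (\<Sum>r\<in>{1..n}. c r * (\<Sum>b\<in>I. (if a r + 1 < N then (if b = a(r := a r + 1) then 1 else 0)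
                              else (if b = a(r := 0) then beta r else 0)) * V b))"
  proof -
    have pr: "params mu beta c d Dc = d" "\<And>r. params mu beta c d (Cf r) = c r"
      "\<And>r. params mu beta c d (Beta r) = beta r" by (simp_all add: params_def)
    have "(\<Sum>b\<in>I. Ent n N (params mu beta c d) a b * V b) =
      (\<Sum>b\<in>I. (if b = a then d else 0) * V b) + (\<Sum>b\<in>I. \<Sum>r\<in>{1..n}. c r * ((if a r + 1 < N then (if b = a(r := a r + 1) then 1 else 0)
                              else (if b = a(r := 0) then beta r else 0)) * V b))"
      unfolding Ent_def pr sum.distrib[symmetric]
      by (rule sum.cong) (auto simp: algebra_simps sum_distrib_left sum_distrib_right)
    also have "\<dots> = d * V a + (\<Sum>r\<in>{1..n}. c r * (\<Sum>b\<in>I. (if a r + 1 < N then (if b = a(r := a r + 1) then 1 else 0)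
                              else (if b = a(r := 0) then beta r else 0)) * V b))"
      using sum.swap[where A=I and B="{1..n}" and g="\<lambda>b r. c r * ((if a r + 1 < N then (if b = a(r := a r + 1) then 1 else 0)
                              else (if b = a(r := 0) then beta r else 0)) * V b)"]
      by (simp add: sum_delta_mult fin a sum_distrib_left)
    finally show ?thesis .
  qed
  also have "\<dots> = (d + (\<Sum>r\<in>{1..n}. c r * y r)) * V a"
  proof -
    have "(\<Sum>r\<in>{1..n}. c r * (\<Sum>b\<in>I. (if a r + 1 < N then (if b = a(r := a r + 1) then 1 else 0)
                              else (if b = a(r := 0) then beta r else 0)) * V b)) = (\<Sum>r\<in>{1..n}. c r * (y r * V a))"
      by (rule sum.cong[OF refl]) (simp only: inner)
    also have "\<dots> = V a * (\<Sum>r\<in>{1..n}. c r * y r)" by (subst sum_distrib_left) (simp add: mult_ac)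
    finally show ?thesis by (simp add: algebra_simps)
  qed
  finally show ?thesis .
qed


lemma generic_poly:
  fixes N n :: nat
  assumes N: "N \<ge> 1"
  shows "\<exists>P :: (param \<Rightarrow> complex) \<Rightarrow> complex. polyfun P \<and> (\<exists>v. P v \<noteq> 0) \<and>
    (\<forall>mu beta c d y. (\<forall>r\<in>{1..n}. beta r \<noteq> 0) \<and> (\<forall>r\<in>{1..n}. y r ^ N = beta r) \<and>
        (\<Sum>r\<in>{1..n}. c r * y r) + d = 0 \<longrightarrow> P (params mu beta c d) = 0)"
proof -
  define I where "I = PiE {1..n} (\<lambda>_. {..<N})"
  have fin: "finite I" unfolding I_def by (intro finite_PiE) auto
  define K where "K = card I"
  have K: "K = N ^ n" unfolding K_def I_def by (simp add: card_PiE)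
  have Kpos: "K > 0" using N K by simp
  obtain dec where dec: "bij_betw dec {0..<K} I" using ex_bij_betw_nat_finite[OF fin] K_def by blast
  have decI: "dec i \<in> I" if "i < K" for i using dec that by (auto simp: bij_betw_def)
  have decinj: "dec i = dec j \<longleftrightarrow> i = j" if "i < K" "j < K" for i j
    using dec that by (auto simp: bij_betw_def inj_on_def)
  define M where "M = (\<lambda>p. mat K K (\<lambda>(i, j). Ent n N p (dec i) (dec j)))"
  define P where "P = (\<lambda>p. det (M p))"
  have "polyfun P" unfolding P_def M_def by (rule polyfun_det) (rule polyfun_Ent)
  moreover have "\<exists>v. P v \<noteq> 0"
  proof
    let ?v = "\<lambda>x. if x = Dc then 1 else (0::complex)"
    have "M ?v = 1\<^sub>m K"
      by (rule eq_matI) (auto simp: M_def Ent_def decinj)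
    then show "P ?v \<noteq> 0" unfolding P_def by simp
  qed
  moreover have "P (params mu beta c d) = 0"
    if b: "\<forall>r\<in>{1..n}. beta r \<noteq> 0" and y: "\<forall>r\<in>{1..n}. y r ^ N = beta r"
      and lin: "(\<Sum>r\<in>{1..n}. c r * y r) + d = 0" for mu beta c d y
  proof -
    define V where "V = (\<lambda>g. \<Prod>r\<in>{1..n}. y r ^ g r)"
    define v where "v = vec K (\<lambda>j. V (dec j))"
    have yz: "y r \<noteq> 0" if "r \<in> {1..n}" for r using b y that N
      by (metis power_0_left not_one_le_zero)
    have carr: "M (params mu beta c d) \<in> carrier_mat K K" unfolding M_def by simp
    have vc: "v \<in> carrier_vec K" unfolding v_def by simp
    have vnz: "v \<noteq> 0\<^sub>v K"
    proof
      assume "v = 0\<^sub>v K"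
      then have "v $ 0 = 0" using Kpos by simp
      then have "V (dec 0) = 0" unfolding v_def using Kpos by simp
      then show False unfolding V_def using yz by (simp add: prod_zero_iff)
    qed
    have "M (params mu beta c d) *\<^sub>v v = 0\<^sub>v K"
    proof (rule eq_vecI)
      show "dim_vec (M (params mu beta c d) *\<^sub>v v) = dim_vec (0\<^sub>v K)" unfolding M_def by simp
      fix i assume "i < dim_vec (0\<^sub>v K)"
      then have i: "i < K" by simp
      have "(M (params mu beta c d) *\<^sub>v v) $ i = (\<Sum>j\<in>{0..<K}. Ent n N (params mu beta c d) (dec i) (dec j) * V (dec j))"
        unfolding M_def v_def using i by (simp add: scalar_prod_def)
      also have "\<dots> = (\<Sum>b\<in>I. Ent n N (params mu beta c d) (dec i) b * V b)"
        by (rule sum.reindex_bij_betw[OF dec])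
      also have "\<dots> = (d + (\<Sum>r\<in>{1..n}. c r * y r)) * V (dec i)"
        unfolding V_def I_def by (rule Ent_sum[OF _ N y]) (use decI[OF i] I_def in simp)
      also have "\<dots> = 0" using lin by (simp add: add.commute)
      finally show "(M (params mu beta c d) *\<^sub>v v) $ i = 0\<^sub>v K $ i" using i by simp
    qed
    then show ?thesis unfolding P_def using det_0_iff_vec_prod_zero[OF carr] vc vnz by blast
  qed
  ultimately show ?thesis by blast
qed


section \<open>Jacobian\<close>

lemma det_mat_expand:
  "det (mat K K (\<lambda>(i, j). E i j)) = (\<Sum>\<pi> \<in> {\<pi>. \<pi> permutes {0..<K}}. signof \<pi> * (\<Prod>i = 0..<K. E i (\<pi> i)))"
    unfolding det_def dim_row_mat dim_col_mat if_P[OF refl]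
  proof (rule sum.cong[OF refl], rule arg_cong[where f="\<lambda>x. _ * x"], rule prod.cong[OF refl])
    fix \<pi> i assume "\<pi> \<in> {\<pi>. \<pi> permutes {0..<K}}" "i \<in> {0..<K}"
    then have "\<pi> i < K" by (auto dest: permutes_in_image)
    with \<open>i \<in> {0..<K}\<close> show "mat K K (\<lambda>(i, j). E i j) $$ (i, \<pi> i) = E i (\<pi> i)" by simp
  qed

lemma det_special:
  fixes J :: "nat \<Rightarrow> nat \<Rightarrow> complex"
  assumes j: "j \<in> {1..n}"
    and Jj: "\<And>s. s \<le> n \<Longrightarrow> s \<noteq> 0 \<Longrightarrow> J j s = 0"
    and Jr: "\<And>r s. r \<in> {1..n} - {j} \<Longrightarrow> s \<le> n \<Longrightarrow> s \<noteq> r \<Longrightarrow> J r s = 0"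
  shows "det (mat (n+1) (n+1) (\<lambda>(r, s). J r s)) = - (J 0 j * J j 0 * (\<Prod>r\<in>{1..n} - {j}. J r r))"
proof -
  define \<tau> where "\<tau> = Transposition.transpose (0::nat) j"
  have j0: "j \<noteq> 0" using j by simp
  have tperm: "\<tau> permutes {0..<n+1}" unfolding \<tau>_def using j by (intro permutes_swap_id) auto
  have zero: "(\<Prod>i = 0..<n+1. J i (\<pi> i)) = 0" if \<pi>: "\<pi> permutes {0..<n+1}" "\<pi> \<noteq> \<tau>" for \<pi>
  proof (rule ccontr)
    assume P0: "(\<Prod>i = 0..<n+1. J i (\<pi> i)) \<noteq> 0"
    have nz: "J i (\<pi> i) \<noteq> 0" if "i \<le> n" for i
    proof
      assume "J i (\<pi> i) = 0"
      then have "(\<Prod>i = 0..<n+1. J i (\<pi> i)) = 0" using that by (intro prod_zero) auto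
      then show False using P0 by simp
    qed
    have range: "\<pi> i \<le> n" if "i \<le> n" for i
    proof -
      have "i \<in> {0..<n+1}" using that by simp
      then have "\<pi> i \<in> {0..<n+1}" using permutes_in_image[OF \<pi>(1)] by blast
      then show ?thesis by simp
    qed
    have jn: "j \<le> n" using j by simp
    have pj: "\<pi> j = 0"
    proof (rule ccontr)
      assume "\<pi> j \<noteq> 0"
      then have "J j (\<pi> j) = 0" using Jj[OF range[OF jn]] by simp
      then show False using nz[OF jn] by simp
    qed
    have pr: "\<pi> r = r" if r: "r \<in> {1..n} - {j}" for r
    proof (rule ccontr)
      have rn: "r \<le> n" using r by simp
      assume "\<pi> r \<noteq> r"
      then have "J r (\<pi> r) = 0" using Jr[OF r range[OF rn]] by simp
      then show False using nz[OF rn] by simp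
    qed
    have p0: "\<pi> 0 = j"
    proof -
      have "\<pi> 0 \<noteq> \<pi> j" using j0 permutes_inj[OF \<pi>(1)] unfolding inj_def by blast
      then have "\<pi> 0 \<noteq> 0" using pj by simp
      moreover have "\<pi> 0 \<notin> {1..n} - {j}"
      proof
        assume a: "\<pi> 0 \<in> {1..n} - {j}"
        then have "\<pi> (\<pi> 0) = \<pi> 0" using pr by blast
        then have "\<pi> 0 = 0" using permutes_inj[OF \<pi>(1)] unfolding inj_def by blast
        then show False using a by simp
      qed
      moreover have "\<pi> 0 \<le> n" using range[of 0] by simp
      ultimately show ?thesis by auto
    qed
    have "\<pi> = \<tau>"
    proof
      fix x
      show "\<pi> x = \<tau> x"
      proof (cases "x \<le> n")
        case True
        then consider "x = 0" | "x = j" | "x \<in> {1..n} - {j}" by force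
        then show ?thesis
        proof cases
          case 1 then show ?thesis by (simp add: \<tau>_def p0)
        next
          case 2 then show ?thesis by (simp add: \<tau>_def pj)
        next
          case 3 then show ?thesis using pr[OF 3] j0 by (auto simp: \<tau>_def transpose_def)
        qed
      next
        case False
        then have "x \<notin> {0..<n+1}" by simp
        then show ?thesis using permutes_not_in[OF \<pi>(1)] permutes_not_in[OF tperm] by metis
      qed
    qed
    then show False using \<pi>(2) by simp
  qed
  have "det (mat (n+1) (n+1) (\<lambda>(r, s). J r s)) = signof \<tau> * (\<Prod>i = 0..<n+1. J i (\<tau> i))"
    unfolding det_mat_expand
  proof -
    have fp: "finite {\<pi>. \<pi> permutes {0..<n + 1}}" by (rule finite_permutations) simp
    have "(\<Sum>\<pi> \<in> {\<pi>. \<pi> permutes {0..<n+1}}. signof \<pi> * (\<Prod>i = 0..<n+1. J i (\<pi> i)))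
      = signof \<tau> * (\<Prod>i = 0..<n+1. J i (\<tau> i)) + (\<Sum>\<pi> \<in> {\<pi>. \<pi> permutes {0..<n+1}} - {\<tau>}. signof \<pi> * (\<Prod>i = 0..<n+1. J i (\<pi> i)))"
      by (rule sum.remove[OF fp]) (use tperm in simp)
    also have "(\<Sum>\<pi> \<in> {\<pi>. \<pi> permutes {0..<n+1}} - {\<tau>}. signof \<pi> * (\<Prod>i = 0..<n+1. J i (\<pi> i))) = 0"
      by (rule sum.neutral) (use zero in auto)
    finally show "(\<Sum>\<pi> \<in> {\<pi>. \<pi> permutes {0..<n+1}}. signof \<pi> * (\<Prod>i = 0..<n+1. J i (\<pi> i)))
      = signof \<tau> * (\<Prod>i = 0..<n+1. J i (\<tau> i))" by simp
  qed
  also have "signof \<tau> = (-1 :: complex)" unfolding \<tau>_def using j0 by (simp add: sign_swap_id)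
  also have "{0..<n+1} = insert 0 (insert j ({1..n} - {j}))" using j by auto
  also have "(\<Prod>i \<in> insert 0 (insert j ({1..n} - {j})). J i (\<tau> i)) = J 0 j * J j 0 * (\<Prod>r\<in>{1..n} - {j}. J r r)"
  proof -
    have "(\<Prod>i\<in>{1..n} - {j}. J i (\<tau> i)) = (\<Prod>r\<in>{1..n} - {j}. J r r)"
      by (rule prod.cong) (auto simp: \<tau>_def transpose_def)
    moreover have "(\<Prod>i \<in> insert 0 (insert j ({1..n} - {j})). J i (\<tau> i))
       = J 0 (\<tau> 0) * (J j (\<tau> j) * (\<Prod>i\<in>{1..n} - {j}. J i (\<tau> i)))"
      using j0 by (simp add: prod.insert_remove)
    ultimately show ?thesis by (simp add: \<tau>_def)
  qed
  finally show ?thesis by simp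
qed


lemma cderiv_eq: "(f has_field_derivative D) (at x) \<Longrightarrow> cderiv f x = D"
  unfolding cderiv_def by (rule some_equality) (auto intro: DERIV_unique)

lemma deriv_upd: "((\<lambda>t. (z(s := t)) i) has_field_derivative (if i = s then 1 else 0)) (at x)"
  by (cases "i = s") auto

lemma Q_jac0:
  "cderiv (\<lambda>t. Qsys n m mu beta c d 0 (z(s := t))) (z s) = (if s \<in> {1..n} then c s else 0)"
proof -
  have "((\<lambda>t. Qsys n m mu beta c d 0 (z(s := t))) has_field_derivative
      (\<Sum>i=1..n. c i * (if i = s then 1 else 0))) (at (z s))"
  proof -
    have e: "(\<lambda>t. Qsys n m mu beta c d 0 (z(s := t))) = (\<lambda>t. (\<Sum>i=1..n. c i * (z(s := t)) i) + d)"
      by (simp add: Qsys_def del: fun_upd_apply)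
    have "((\<lambda>t. (\<Sum>i=1..n. c i * (z(s := t)) i) + d) has_field_derivative
      (\<Sum>i=1..n. c i * (if i = s then 1 else 0)) + 0) (at (z s))"
      by (intro DERIV_add DERIV_sum DERIV_cmult deriv_upd DERIV_const)
    then show ?thesis unfolding e by simp
  qed
  moreover have "(\<Sum>i=1..n. c i * (if i = s then 1 else 0)) = (if s \<in> {1..n} then c s else 0)"
    by (simp add: if_distrib[where f="\<lambda>x. _ * x"] cong: if_cong)
  ultimately show ?thesis using cderiv_eq by simp
qed

lemma Q_jacr:
  assumes "r \<noteq> 0"
  shows "cderiv (\<lambda>t. Qsys n m mu beta c d r (z(s := t))) (z s) =
     (if s = 0 then 1 else 0) * (z r ^ (m - 1) - beta r) +
     (z 0 - mu r) * (of_nat (m - 1) * z r ^ (m - 1 - 1) * (if r = s then 1 else 0))"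
proof -
  have "((\<lambda>t. Qsys n m mu beta c d r (z(s := t))) has_field_derivative
      (if 0 = s then 1 else 0) * ((z(s := z s)) r ^ (m - 1) - beta r) +
      ((z(s := z s)) 0 - mu r) * (of_nat (m - 1) * (z(s := z s)) r ^ (m - 1 - 1) * (if r = s then 1 else 0))) (at (z s))"
    unfolding Qsys_def using assms
    by (auto intro!: derivative_eq_intros deriv_upd simp del: fun_upd_apply)
  then show ?thesis using cderiv_eq by (simp add: eq_commute[of 0 s])
qed


lemma all_le_split: "(\<forall>r\<le>n. P r) \<longleftrightarrow> P 0 \<and> (\<forall>r\<in>{1..n}. P (r::nat))"
  apply auto
  subgoal for r by (cases r) auto
  done

lemma part1:
  fixes n m :: nat and mu beta c :: "nat \<Rightarrow> complex" and d :: complex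
  assumes n: "n \<ge> 1" and m: "m \<ge> 2"
    and nz: "\<forall>i\<in>{1..n}. mu i \<noteq> 0 \<and> beta i \<noteq> 0 \<and> c i \<noteq> 0"
    and inj: "inj_on mu {1..n}"
    and nobad: "\<forall>y. (\<forall>r\<in>{1..n}. y r ^ (m - 1) = beta r) \<longrightarrow> (\<Sum>r\<in>{1..n}. c r * y r) + d \<noteq> 0"
  shows "finite (solution_set n (Qsys n m mu beta c d)) \<and>
           card (solution_set n (Qsys n m mu beta c d)) = n * (m - 1) ^ (n - 1) \<and>
           (\<forall>z \<in> solution_set n (Qsys n m mu beta c d).
              det (jacobian n (Qsys n m mu beta c d) z) \<noteq> 0)"
proof -
  define N where "N = m - 1"
  have N1: "N \<ge> 1" using m unfolding N_def by simp
  define sol where "sol = solution_set n (Qsys n m mu beta c d)"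
  have sol_iff: "z \<in> sol \<longleftrightarrow> (\<forall>i>n. z i = 0) \<and> (\<Sum>i=1..n. c i * z i) + d = 0 \<and>
      (\<forall>r\<in>{1..n}. (z 0 - mu r) * (z r ^ N - beta r) = 0)" for z
    unfolding sol_def solution_set_def N_def mem_Collect_eq all_le_split[of n]
    by (auto simp: Qsys_def)
  have root: "\<exists>j\<in>{1..n}. z 0 = mu j" if z: "z \<in> sol" for z
  proof (rule ccontr)
    assume "\<not> (\<exists>j\<in>{1..n}. z 0 = mu j)"
    then have "\<forall>r\<in>{1..n}. z r ^ N = beta r" using z unfolding sol_iff by auto
    then have "(\<Sum>r\<in>{1..n}. c r * z r) + d \<noteq> 0" using nobad unfolding N_def by blast
    then show False using z unfolding sol_iff by blast
  qed
  have other: "z r ^ N = beta r" if z: "z \<in> sol" and j: "j \<in> {1..n}" "z 0 = mu j" and r: "r \<in> {1..n} - {j}" for z j r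
  proof -
    have rr: "r \<noteq> j" "r \<in> {1..n}" using r by auto
    have "mu r \<noteq> mu j" using rr j(1) by (simp add: inj_on_eq_iff[OF inj])
    then have ne: "z 0 - mu r \<noteq> 0" using j(2) by simp
    have "(z 0 - mu r) * (z r ^ N - beta r) = 0" using z r unfolding sol_iff by blast
    then show ?thesis using ne by simp
  qed
  have selfne: "z j ^ N \<noteq> beta j" if z: "z \<in> sol" and j: "j \<in> {1..n}" "z 0 = mu j" for z j
  proof
    assume "z j ^ N = beta j"
    then have "\<forall>r\<in>{1..n}. z r ^ N = beta r" using other[OF z j] by blast
    then have "(\<Sum>r\<in>{1..n}. c r * z r) + d \<noteq> 0" using nobad unfolding N_def by blast
    then show False using z unfolding sol_iff by blast
  qed
  define S where "S = (\<lambda>j. {z\<in>sol. z 0 = mu j})"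
  define R where "R = (\<lambda>j. PiE ({1..n} - {j}) (\<lambda>r. {y. y ^ N = beta r}))"
  have cardR: "card (R j) = N ^ (n - 1)" "finite (R j)" if j: "j \<in> {1..n}" for j
  proof -
    have "card (R j) = (\<Prod>r\<in>{1..n} - {j}. card {y. y ^ N = beta r})" unfolding R_def
      by (rule card_PiE) simp
    also have "\<dots> = (\<Prod>r\<in>{1..n} - {j}. N)"
      by (rule prod.cong[OF refl]) (use nz N1 in \<open>auto intro!: card_nth_roots\<close>)
    also have "\<dots> = N ^ (n - 1)" using j by simp
    finally show "card (R j) = N ^ (n - 1)" .
    show "finite (R j)" unfolding R_def
      by (rule finite_PiE) (use nz N1 in \<open>auto intro!: finite_nth_roots\<close>)
  qed
  have bij: "bij_betw (\<lambda>z. restrict z ({1..n} - {j})) (S j) (R j)" if j: "j \<in> {1..n}" for j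
  proof (rule bij_betwI')
    fix z z' assume zS: "z \<in> S j" and z'S: "z' \<in> S j"
    show "(restrict z ({1..n} - {j}) = restrict z' ({1..n} - {j})) = (z = z')"
    proof
      assume eq: "restrict z ({1..n} - {j}) = restrict z' ({1..n} - {j})"
      have eqr: "z r = z' r" if "r \<in> {1..n} - {j}" for r
        using fun_cong[OF eq, of r] that by simp
      have z: "z \<in> sol" "z 0 = mu j" and z': "z' \<in> sol" "z' 0 = mu j" using zS z'S unfolding S_def by auto
      have lin: "c j * z j + (\<Sum>r\<in>{1..n} - {j}. c r * z r) + d = 0"
        using z(1) j unfolding sol_iff by (simp add: sum.remove)
      have lin': "c j * z' j + (\<Sum>r\<in>{1..n} - {j}. c r * z' r) + d = 0"
        using z'(1) j unfolding sol_iff by (simp add: sum.remove)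
      have "(\<Sum>r\<in>{1..n} - {j}. c r * z r) = (\<Sum>r\<in>{1..n} - {j}. c r * z' r)"
        by (rule sum.cong) (auto simp: eqr)
      then have l2: "c j * z' j + (\<Sum>r\<in>{1..n} - {j}. c r * z r) + d = 0"
        using lin' by (simp only:)
      have "c j * z j + (\<Sum>r\<in>{1..n} - {j}. c r * z r) + d = c j * z' j + (\<Sum>r\<in>{1..n} - {j}. c r * z r) + d"
        using lin l2 by (simp only:)
      then have "c j * z j = c j * z' j" by (simp only: add_right_cancel)
      then have zj: "z j = z' j" using nz j by simp
      show "z = z'"
      proof
        fix i
        show "z i = z' i"
        proof (cases "i = 0")
          case True then show ?thesis using z z' by simp
        next
          case False
          show ?thesis
          proof (cases "i \<le> n")
            case True
            show ?thesis
            proof (cases "i = j")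
              case True then show ?thesis using zj by simp
            next
              case False
              then have "i \<in> {1..n} - {j}" using \<open>i \<noteq> 0\<close> \<open>i \<le> n\<close> by simp
              then show ?thesis by (rule eqr)
            qed
          next
            case False
            then have "i > n" by simp
            moreover have "\<forall>i>n. z i = 0" "\<forall>i>n. z' i = 0" using z(1) z'(1) unfolding sol_iff by blast+
            ultimately show ?thesis by simp
          qed
        qed
      qed
    qed simp
  next
    fix z assume zS: "z \<in> S j"
    then have z: "z \<in> sol" "z 0 = mu j" unfolding S_def by auto
    show "restrict z ({1..n} - {j}) \<in> R j" unfolding R_def
      using other[OF z(1) j z(2)] by (simp add: restrict_PiE_iff)
  next
    fix y assume y: "y \<in> R j"
    define xj where "xj = - (d + (\<Sum>r\<in>{1..n} - {j}. c r * y r)) / c j"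
    define z where "z = (\<lambda>i. if i = 0 then mu j else if i \<in> {1..n} - {j} then y i else if i = j then xj else 0)"
    have yr: "y r ^ N = beta r" if "r \<in> {1..n} - {j}" for r
    proof -
      have "y r \<in> {y. y ^ N = beta r}" using y that unfolding R_def by (rule PiE_mem)
      then show ?thesis by simp
    qed
    have "(\<Sum>i=1..n. c i * z i) = c j * xj + (\<Sum>r\<in>{1..n} - {j}. c r * y r)"
    proof -
      have "(\<Sum>i=1..n. c i * z i) = c j * z j + (\<Sum>r\<in>{1..n} - {j}. c r * z r)"
        using j by (simp add: sum.remove)
      also have "(\<Sum>r\<in>{1..n} - {j}. c r * z r) = (\<Sum>r\<in>{1..n} - {j}. c r * y r)"
        by (rule sum.cong) (auto simp: z_def)
      finally show ?thesis using j by (simp add: z_def)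
    qed
    also have "\<dots> = - d" using nz j unfolding xj_def by (simp add: field_simps)
    finally have lin: "(\<Sum>i=1..n. c i * z i) + d = 0" by simp
    have zsol: "z \<in> sol" unfolding sol_iff
    proof (intro conjI allI impI ballI)
      fix i :: nat assume "i > n" then show "z i = 0" using j by (simp add: z_def)
    next
      show "(\<Sum>i=1..n. c i * z i) + d = 0" by (rule lin)
    next
      fix r assume r: "r \<in> {1..n}"
      show "(z 0 - mu r) * (z r ^ N - beta r) = 0"
      proof (cases "r = j")
        case True then show ?thesis by (simp add: z_def)
      next
        case False
        then have "r \<in> {1..n} - {j}" using r by simp
        then show ?thesis using yr[of r] by (simp add: z_def)
      qed
    qed
    have "z \<in> S j" unfolding S_def using zsol by (simp add: z_def)
    moreover have "y = restrict z ({1..n} - {j})"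
    proof
      fix i
      show "y i = restrict z ({1..n} - {j}) i"
      proof (cases "i \<in> {1..n} - {j}")
        case True then show ?thesis by (simp add: z_def)
      next
        case False
        have "y \<in> extensional ({1..n} - {j})" using y unfolding R_def by (rule PiE_iff[THEN iffD1, THEN conjunct2])
        then have "y i = undefined" using False by (rule extensional_arb)
        then show ?thesis using False by auto
      qed
    qed
    ultimately show "\<exists>z\<in>S j. y = restrict z ({1..n} - {j})" by blast
  qed
  have finS: "finite (S j)" and cardS: "card (S j) = N ^ (n - 1)" if j: "j \<in> {1..n}" for j
    using bij_betw_finite[OF bij[OF j]] cardR[OF j] bij_betw_same_card[OF bij[OF j]] by auto
  have solU: "sol = (\<Union>j\<in>{1..n}. S j)"
    using root unfolding S_def by auto
  have fin: "finite sol" unfolding solU using finS by auto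
  have "card sol = (\<Sum>j\<in>{1..n}. card (S j))" unfolding solU
  proof (rule card_UN_disjoint)
    show "\<forall>i\<in>{1..n}. \<forall>j\<in>{1..n}. i \<noteq> j \<longrightarrow> S i \<inter> S j = {}"
    proof (intro ballI impI)
      fix i j assume ij: "i \<in> {1..n}" "j \<in> {1..n}" "i \<noteq> j"
      then have "mu i \<noteq> mu j" by (simp add: inj_on_eq_iff[OF inj])
      then show "S i \<inter> S j = {}" unfolding S_def by auto
    qed
  qed (use finS in auto)
  also have "\<dots> = n * N ^ (n - 1)" using cardS by simp
  finally have card: "card sol = n * N ^ (n - 1)" .
  have jac: "det (jacobian n (Qsys n m mu beta c d) z) \<noteq> 0" if z: "z \<in> sol" for z
  proof -
    obtain j where j: "j \<in> {1..n}" "z 0 = mu j" using root[OF z] by blast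
    let ?J = "\<lambda>r s. cderiv (\<lambda>t. Qsys n m mu beta c d r (z(s := t))) (z s)"
    have j0: "j \<noteq> 0" using j by simp
    have "det (jacobian n (Qsys n m mu beta c d) z) = - (?J 0 j * ?J j 0 * (\<Prod>r\<in>{1..n} - {j}. ?J r r))"
      unfolding jacobian_def
    proof (rule det_special[OF j(1)])
      fix s assume "s \<le> n" "s \<noteq> 0"
      then show "?J j s = 0" using j j0 by (simp add: Q_jacr)
    next
      fix r s assume r: "r \<in> {1..n} - {j}" and "s \<le> n" "s \<noteq> r"
      then show "?J r s = 0" using other[OF z j r] by (auto simp: Q_jacr N_def)
    qed
    also have "\<dots> \<noteq> 0"
    proof -
      have "?J 0 j = c j" using j by (simp add: Q_jac0)
      moreover have "?J j 0 = z j ^ N - beta j" using j0 by (simp add: Q_jacr N_def)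
      moreover have "?J r r = (mu j - mu r) * (of_nat N * z r ^ (N - 1))" if r: "r \<in> {1..n} - {j}" for r
        using r j by (simp add: Q_jacr N_def)
      moreover have "(mu j - mu r) * (of_nat N * z r ^ (N - 1)) \<noteq> 0" if r: "r \<in> {1..n} - {j}" for r
      proof -
        have rr: "r \<noteq> j" "r \<in> {1..n}" using r by auto
        have "mu r \<noteq> mu j" using rr j(1) by (simp add: inj_on_eq_iff[OF inj])
        moreover have "z r \<noteq> 0" using other[OF z j r] nz r N1 by (metis DiffD1 power_0_left not_one_le_zero)
        ultimately show ?thesis using N1 by simp
      qed
      ultimately show ?thesis using selfne[OF z j] nz j by (simp add: prod_zero_iff)
    qed
    finally show ?thesis .
  qed
  show ?thesis using fin card jac unfolding sol_def N_def by blast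
qed

theorem mainTheorem5:
  fixes n m :: nat
  assumes "n \<ge> 1" and "m \<ge> 2"
  shows
   "(\<exists>P :: (param \<Rightarrow> complex) \<Rightarrow> complex. polyfun P \<and> (\<exists>v. P v \<noteq> 0) \<and>
      (\<forall>mu beta c :: nat \<Rightarrow> complex. \<forall>d :: complex.
         (\<forall>i\<in>{1..n}. mu i \<noteq> 0 \<and> beta i \<noteq> 0 \<and> c i \<noteq> 0) \<and> d \<noteq> 0 \<and>
         inj_on mu {1..n} \<and> P (params mu beta c d) \<noteq> 0 \<longrightarrow>
           finite (solution_set n (Qsys n m mu beta c d)) \<and>
           card (solution_set n (Qsys n m mu beta c d)) = n * (m - 1) ^ (n - 1) \<and>
           (\<forall>z \<in> solution_set n (Qsys n m mu beta c d).
              det (jacobian n (Qsys n m mu beta c d) z) \<noteq> 0)))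
    \<and> (\<forall>mu beta c :: nat \<Rightarrow> complex. \<forall>d :: complex.
         (\<forall>i\<in>{1..n}. mu i \<noteq> 0 \<and> beta i \<noteq> 0 \<and> c i \<noteq> 0) \<and> d \<noteq> 0 \<and> inj_on mu {1..n} \<longrightarrow>
           system_bezout_number (n+1) (Qsys n m mu beta c d) [{0}, {1..n}] = n * (m - 1) ^ (n - 1))
    \<and> (\<forall>A B :: (nat \<Rightarrow> nat) \<Rightarrow> complex. \<forall>k. \<forall>a :: nat \<Rightarrow> complex. \<forall>b :: complex.
         1 \<le> k \<and> k \<le> m \<and>
         (\<exists>i\<in>{1..n}. a i \<noteq> 0) \<and>
         (\<forall>i\<in>{1..n}. \<exists>x. tensor_apply m n 1 B x i \<noteq> 0) \<longrightarrow>
           system_bezout_number (n+1) (Gsys n m A B k a b) [{0}, {1..n}] = n * (m - 1) ^ (n - 1))"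
proof -
  have N1: "1 \<le> m - 1" using assms(2) by simp
  obtain P :: "(param \<Rightarrow> complex) \<Rightarrow> complex" where P: "polyfun P" "\<exists>v. P v \<noteq> 0"
    "\<forall>mu beta c d y. (\<forall>r\<in>{1..n}. beta r \<noteq> 0) \<and> (\<forall>r\<in>{1..n}. y r ^ (m - 1) = beta r) \<and>
        (\<Sum>r\<in>{1..n}. c r * y r) + d = 0 \<longrightarrow> P (params mu beta c d) = 0"
    using generic_poly[OF N1, of n] by blast
  have A: "\<forall>mu beta c :: nat \<Rightarrow> complex. \<forall>d :: complex.
         (\<forall>i\<in>{1..n}. mu i \<noteq> 0 \<and> beta i \<noteq> 0 \<and> c i \<noteq> 0) \<and> d \<noteq> 0 \<and>
         inj_on mu {1..n} \<and> P (params mu beta c d) \<noteq> 0 \<longrightarrow>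
           finite (solution_set n (Qsys n m mu beta c d)) \<and>
           card (solution_set n (Qsys n m mu beta c d)) = n * (m - 1) ^ (n - 1) \<and>
           (\<forall>z \<in> solution_set n (Qsys n m mu beta c d).
              det (jacobian n (Qsys n m mu beta c d) z) \<noteq> 0)"
  proof (intro allI impI)
    fix mu beta c :: "nat \<Rightarrow> complex" and d :: complex
    assume h: "(\<forall>i\<in>{1..n}. mu i \<noteq> 0 \<and> beta i \<noteq> 0 \<and> c i \<noteq> 0) \<and> d \<noteq> 0 \<and>
         inj_on mu {1..n} \<and> P (params mu beta c d) \<noteq> 0"
    have nobad: "\<forall>y. (\<forall>r\<in>{1..n}. y r ^ (m - 1) = beta r) \<longrightarrow> (\<Sum>r\<in>{1..n}. c r * y r) + d \<noteq> 0"
    proof (intro allI impI notI)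
      fix y assume "\<forall>r\<in>{1..n}. y r ^ (m - 1) = beta r" "(\<Sum>r\<in>{1..n}. c r * y r) + d = 0"
      moreover have "\<forall>r\<in>{1..n}. beta r \<noteq> 0" using h by blast
      ultimately have "P (params mu beta c d) = 0" using P(3) by blast
      then show False using h by blast
    qed
    show "finite (solution_set n (Qsys n m mu beta c d)) \<and>
           card (solution_set n (Qsys n m mu beta c d)) = n * (m - 1) ^ (n - 1) \<and>
           (\<forall>z \<in> solution_set n (Qsys n m mu beta c d).
              det (jacobian n (Qsys n m mu beta c d) z) \<noteq> 0)"
      by (rule part1[OF assms(1,2)]) (use h nobad in auto)
  qed
  have B: "\<forall>mu beta c :: nat \<Rightarrow> complex. \<forall>d :: complex.
         (\<forall>i\<in>{1..n}. mu i \<noteq> 0 \<and> beta i \<noteq> 0 \<and> c i \<noteq> 0) \<and> d \<noteq> 0 \<and> inj_on mu {1..n} \<longrightarrow>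
           system_bezout_number (n+1) (Qsys n m mu beta c d) [{0}, {1..n}] = n * (m - 1) ^ (n - 1)"
    using part2[OF assms(1,2)] by blast
  have C: "\<forall>A B :: (nat \<Rightarrow> nat) \<Rightarrow> complex. \<forall>k. \<forall>a :: nat \<Rightarrow> complex. \<forall>b :: complex.
         1 \<le> k \<and> k \<le> m \<and>
         (\<exists>i\<in>{1..n}. a i \<noteq> 0) \<and>
         (\<forall>i\<in>{1..n}. \<exists>x. tensor_apply m n 1 B x i \<noteq> 0) \<longrightarrow>
           system_bezout_number (n+1) (Gsys n m A B k a b) [{0}, {1..n}] = n * (m - 1) ^ (n - 1)"
    using part3[OF assms(1,2)] by blast
  show ?thesis using P(1,2) A B C by blast
qed

end
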